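(* If $\ell$ is a bisector of a quadrilateral $Q$ in $K^2$, then there is a unique bisector $\ell'$ of $Q$ for which $\{\ell,\ell'\}$ is a $Q$-pair.
   Context: $K$ is a field of characteristic $\neq 2$. Every line $L$ in $K^2$ has an equation $tX-uY+v=0$ normalized so that $t=1$ if $u=0$ and $u=1$ if $u\neq 0$; coefficients denoted $t_L,u_L,v_L$. A quadrilateral $Q=ABA'B'$ consists of four distinct lines $A,B,A',B'$ (sides), not all through one point, with adjacent sides ($A,B$; $B,A'$; $A',B'$; $B',A$) not parallel; opposite sides may be parallel. Vertices: $A\cap B$, $B\cap A'$, $A'\cap B'$, $B'\cap A$ (two may coincide if three sides are concurrent). The centroid is the average of the four vertices. Let $\alpha=t_Au_Bu_{A'}u_{B'}-u_At_Bu_{A'}u_{B'}+u_Au_Bt_{A'}u_{B'}-u_Au_Bu_{A'}t_{B'}$, $\beta=t_Au_Bt_{A'}u_{B'}-u_At_Bu_{A'}t_{B'}$, $\gamma=t_At_Bt_{A'}u_{B'}-t_At_Bu_{A'}t_{B'}+t_Au_Bt_{A'}t_{B'}-u_At_Bt_{A'}t_{B'}$, and $\langle \mathbf v,\mathbf w\rangle_Q=\mathbf v^T\begin{pmatrix}\gamma&-\beta\\-\beta&\alpha\end{pmatrix}\mathbf w$. Lines $\ell_1,\ell_2$ are $Q$-orthogonal if $\langle (u_{\ell_1},t_{\ell_1}),(u_{\ell_2},t_{\ell_2})\rangle_Q=0$. A line $\ell$ crosses a pair $\{\ell_1,\ell_2\}$ if distinct from both and not parallel to both; $\mathrm{mid}_{\{\ell_1,\ell_2\}}(\ell)$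 is the midpoint of the points where $\ell$ meets $\ell_1,\ell_2$ (the point at infinity of $\ell$ if one is at infinity). $\ell$ bisects $Q$ (is a bisector) if $\mathrm{mid}_{\mathsf P}(\ell)$ is the same for all pairs $\mathsf P$ among $\{A,A'\},\{B,B'\}$ that $\ell$ crosses; this common point is the midpoint of the bisector. A pair $\{\ell_1,\ell_2\}$ of bisectors (possibly $\ell_1=\ell_2$) is a $Q$-pair if the midpoint of their midpoints is the centroid of $Q$ and $\ell_1,\ell_2$ are $Q$-orthogonal. *)

theory Defs
  imports Main
begin

(* A line of K^2 is represented by its normalized coefficient triple (t,u,v),
   standing for the equation  t*X - u*Y + v = 0, normalized so that
   t = 1 if u = 0, and u = 1 if u ~= 0. *)
type_synonym 'a line = "'a \<times> 'a \<times> 'a"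

definition tL :: "'a line \<Rightarrow> 'a" where "tL l = fst l"
definition uL :: "'a line \<Rightarrow> 'a" where "uL l = fst (snd l)"
definition vL :: "'a line \<Rightarrow> 'a" where "vL l = snd (snd l)"

definition is_line :: "('a::field) line \<Rightarrow> bool" where
  "is_line l \<longleftrightarrow> (uL l = 0 \<and> tL l = 1) \<or> uL l = 1"

definition on_line :: "('a::field) \<times> 'a \<Rightarrow> 'a line \<Rightarrow> bool" where
  "on_line p l \<longleftrightarrow> tL l * fst p - uL l * snd p + vL l = 0"

definition parallel :: "('a::field) line \<Rightarrow> 'a line \<Rightarrow> bool" where
  "parallel l1 l2 \<longleftrightarrow> tL l1 * uL l2 = uL l1 * tL l2"

definition meet :: "('a::field) line \<Rightarrow> 'a line \<Rightarrow> 'a \<times> 'a" where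
  "meet l1 l2 = (THE p. on_line p l1 \<and> on_line p l2)"

definition midpt :: "('a::field) \<times> 'a \<Rightarrow> 'a \<times> 'a \<Rightarrow> 'a \<times> 'a" where
  "midpt p q = ((fst p + fst q) / 2, (snd p + snd q) / 2)"

type_synonym 'a quad = "'a line \<times> 'a line \<times> 'a line \<times> 'a line"

definition quadrilateral :: "('a::field) quad \<Rightarrow> bool" where
  "quadrilateral Q \<longleftrightarrow> (case Q of (A, B, A', B') \<Rightarrow>
     is_line A \<and> is_line B \<and> is_line A' \<and> is_line B' \<and>
     distinct [A, B, A', B'] \<and>
     \<not> (\<exists>p. on_line p A \<and> on_line p B \<and> on_line p A' \<and> on_line p B') \<and>
     \<not> parallel A B \<and> \<not> parallel B A' \<and> \<not> parallel A' B' \<and> \<not> parallel B' A)"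

definition centroid :: "('a::field) quad \<Rightarrow> 'a \<times> 'a" where
  "centroid Q = (case Q of (A, B, A', B') \<Rightarrow>
     let P1 = meet A B; P2 = meet B A'; P3 = meet A' B'; P4 = meet B' A in
     ((fst P1 + fst P2 + fst P3 + fst P4) / 4, (snd P1 + snd P2 + snd P3 + snd P4) / 4))"

definition qalpha :: "('a::field) quad \<Rightarrow> 'a" where
  "qalpha Q = (case Q of (A, B, A', B') \<Rightarrow>
      tL A * uL B * uL A' * uL B' - uL A * tL B * uL A' * uL B'
    + uL A * uL B * tL A' * uL B' - uL A * uL B * uL A' * tL B')"

definition qbeta :: "('a::field) quad \<Rightarrow> 'a" where
  "qbeta Q = (case Q of (A, B, A', B') \<Rightarrow>
      tL A * uL B * tL A' * uL B' - uL A * tL B * uL A' * tL B')"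

definition qgamma :: "('a::field) quad \<Rightarrow> 'a" where
  "qgamma Q = (case Q of (A, B, A', B') \<Rightarrow>
      tL A * tL B * tL A' * uL B' - tL A * tL B * uL A' * tL B'
    + tL A * uL B * tL A' * tL B' - uL A * tL B * tL A' * tL B')"

definition qinner :: "('a::field) quad \<Rightarrow> 'a \<times> 'a \<Rightarrow> 'a \<times> 'a \<Rightarrow> 'a" where
  "qinner Q v w =
     fst v * (qgamma Q * fst w - qbeta Q * snd w) + snd v * (- qbeta Q * fst w + qalpha Q * snd w)"

definition q_orthogonal :: "('a::field) quad \<Rightarrow> 'a line \<Rightarrow> 'a line \<Rightarrow> bool" where
  "q_orthogonal Q l1 l2 \<longleftrightarrow> qinner Q (uL l1, tL l1) (uL l2, tL l2) = 0"

(* Extended points: affine points, and points at infinity given by a direction *)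
datatype 'a xpt = Fin "'a \<times> 'a" | Infty "'a \<times> 'a"

definition inf_pt :: "('a::field) line \<Rightarrow> 'a xpt" where
  "inf_pt l = Infty (uL l, tL l)"

definition crosses :: "('a::field) line \<Rightarrow> 'a line \<Rightarrow> 'a line \<Rightarrow> bool" where
  "crosses l l1 l2 \<longleftrightarrow> l \<noteq> l1 \<and> l \<noteq> l2 \<and> \<not> (parallel l l1 \<and> parallel l l2)"

definition mid :: "('a::field) line \<Rightarrow> 'a line \<Rightarrow> 'a line \<Rightarrow> 'a xpt" where
  "mid l1 l2 l = (if parallel l l1 \<or> parallel l l2 then inf_pt l
                  else Fin (midpt (meet l l1) (meet l l2)))"

definition bisector :: "('a::field) quad \<Rightarrow> 'a line \<Rightarrow> bool" where
  "bisector Q l \<longleftrightarrow> is_line l \<and> (case Q of (A, B, A', B') \<Rightarrow>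
     (crosses l A A' \<and> crosses l B B' \<longrightarrow> mid A A' l = mid B B' l))"

(* midpoint of a bisector: mid over a pair it crosses (every line crosses at least one
   pair of opposite sides of a quadrilateral) *)
definition bis_mid :: "('a::field) quad \<Rightarrow> 'a line \<Rightarrow> 'a xpt" where
  "bis_mid Q l = (case Q of (A, B, A', B') \<Rightarrow>
     (if crosses l A A' then mid A A' l else mid B B' l))"

definition Q_pair :: "('a::field) quad \<Rightarrow> 'a line \<Rightarrow> 'a line \<Rightarrow> bool" where
  "Q_pair Q l1 l2 \<longleftrightarrow> bisector Q l1 \<and> bisector Q l2 \<and>
     (\<exists>m1 m2. bis_mid Q l1 = Fin m1 \<and> bis_mid Q l2 = Fin m2 \<and> midpt m1 m2 = centroid Q) \<and>
     q_orthogonal Q l1 l2"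

end

theory Submission
  imports Defs
begin


definition dirl :: "('a::field) line \<Rightarrow> 'a \<times> 'a" where "dirl l = (uL l, tL l)"
definition lv :: "('a::field) line \<Rightarrow> 'a \<times> 'a \<Rightarrow> 'a" where
  "lv L p = tL L * fst p - uL L * snd p + vL L"
definition DD :: "('a::field) line \<Rightarrow> 'a \<times> 'a \<Rightarrow> 'a" where
  "DD L d = tL L * fst d - uL L * snd d"
definition pax :: "('a::field) line \<Rightarrow> 'a line \<Rightarrow> 'a \<times> 'a \<Rightarrow> 'a" where
  "pax L1 L2 d = DD L2 d * tL L1 + DD L1 d * tL L2"
definition pay :: "('a::field) line \<Rightarrow> 'a line \<Rightarrow> 'a \<times> 'a \<Rightarrow> 'a" where
  "pay L1 L2 d = - (DD L2 d * uL L1 + DD L1 d * uL L2)"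
definition pb :: "('a::field) line \<Rightarrow> 'a line \<Rightarrow> 'a \<times> 'a \<Rightarrow> 'a" where
  "pb L1 L2 d = DD L2 d * vL L1 + DD L1 d * vL L2"
definition pe :: "('a::field) line \<Rightarrow> 'a line \<Rightarrow> 'a \<times> 'a \<Rightarrow> 'a \<times> 'a \<Rightarrow> 'a" where
  "pe L1 L2 d m = pax L1 L2 d * fst m + pay L1 L2 d * snd m + pb L1 L2 d"

lemma pe_alt: "pe L1 L2 d m = DD L2 d * lv L1 m + DD L1 d * lv L2 m"
  unfolding pe_def pax_def pay_def pb_def lv_def by (simp add: algebra_simps)

lemma pe_sym: "pe L1 L2 d m = pe L2 L1 d m"
  unfolding pe_alt by (simp add: algebra_simps)

lemma on_line_lv: "on_line p L \<longleftrightarrow> lv L p = 0"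
  unfolding on_line_def lv_def by simp

lemma parallel_DD: "parallel l L \<longleftrightarrow> DD L (dirl l) = 0"
  unfolding parallel_def DD_def dirl_def by (auto simp: algebra_simps)

lemma parallel_sym: "parallel a b \<longleftrightarrow> parallel b a"
  unfolding parallel_def by (auto simp: mult.commute)

lemma parallel_refl: "parallel a a"
  unfolding parallel_def by (simp add: mult.commute)

lemma is_line_dir: "is_line l \<Longrightarrow> dirl l \<noteq> (0,0)"
  unfolding is_line_def dirl_def by auto

lemma par_trans:
  assumes "is_line l" "parallel l X" "parallel l Y" shows "parallel X Y"
proof (cases "uL l = 0")
  case True
  then have "tL l = 1" using assms(1) unfolding is_line_def by auto
  then show ?thesis using assms True unfolding parallel_def by auto
next
  case False
  from assms(2,3) have "tL X = tL l * uL X / uL l" "tL Y = tL l * uL Y / uL l"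
    unfolding parallel_def using False by (auto simp: field_simps)
  then show ?thesis unfolding parallel_def by (simp add: field_simps)
qed

lemma lin2_zero:
  fixes a b c d x y :: "'a::field"
  assumes "a * d - b * c \<noteq> 0" "a * x + b * y = 0" "c * x + d * y = 0"
  shows "x = 0 \<and> y = 0"
proof -
  have "(a * d - b * c) * x = d * (a * x + b * y) - b * (c * x + d * y)" by (simp add: algebra_simps)
  then have hx: "(a * d - b * c) * x = 0" using assms by simp
  have "(a * d - b * c) * y = a * (c * x + d * y) - c * (a * x + b * y)" by (simp add: algebra_simps)
  then have hy: "(a * d - b * c) * y = 0" using assms by simp
  from hx hy assms(1) show ?thesis by simp
qed

lemma meet_unique:
  assumes np: "\<not> parallel l1 l2" and "on_line p l1" "on_line p l2"
  shows "meet l1 l2 = p"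
  unfolding meet_def
proof (rule the_equality)
  show "on_line p l1 \<and> on_line p l2" using assms by simp
next
  fix q assume q: "on_line q l1 \<and> on_line q l2"
  have "tL l1 * (- uL l2) - (- uL l1) * tL l2 \<noteq> 0" using np unfolding parallel_def by (auto simp: algebra_simps)
  moreover have "tL l1 * (fst q - fst p) + (- uL l1) * (snd q - snd p) =
     (tL l1 * fst q - uL l1 * snd q + vL l1) - (tL l1 * fst p - uL l1 * snd p + vL l1)"
    by (simp add: algebra_simps)
  then have "tL l1 * (fst q - fst p) + (- uL l1) * (snd q - snd p) = 0"
    using q assms(2) unfolding on_line_def by simp
  moreover have "tL l2 * (fst q - fst p) + (- uL l2) * (snd q - snd p) =
     (tL l2 * fst q - uL l2 * snd q + vL l2) - (tL l2 * fst p - uL l2 * snd p + vL l2)"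
    by (simp add: algebra_simps)
  then have "tL l2 * (fst q - fst p) + (- uL l2) * (snd q - snd p) = 0"
    using q assms(3) unfolding on_line_def by simp
  ultimately have "fst q - fst p = 0 \<and> snd q - snd p = 0" by (rule lin2_zero)
  then show "q = p" by (simp add: prod_eq_iff)
qed

definition meetf :: "('a::field) line \<Rightarrow> 'a line \<Rightarrow> 'a \<times> 'a" where
  "meetf L1 L2 = ((vL L1 * uL L2 - uL L1 * vL L2) / (tL L2 * uL L1 - uL L2 * tL L1),
                  (vL L1 * tL L2 - tL L1 * vL L2) / (tL L2 * uL L1 - uL L2 * tL L1))"

lemma frac_on:
  fixes t u v a b X :: "'a::field"
  assumes "X \<noteq> 0" "t * a - u * b + v * X = 0"
  shows "t * (a / X) - u * (b / X) + v = 0"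
proof -
  have "t * (a / X) - u * (b / X) + v = (t * a - u * b + v * X) / X"
    using assms(1) by (simp add: field_simps)
  then show ?thesis using assms(2) by simp
qed

lemma meetf_on:
  assumes np: "\<not> parallel L1 L2" shows "on_line (meetf L1 L2) L1" "on_line (meetf L1 L2) L2"
proof -
  have nz: "tL L2 * uL L1 - uL L2 * tL L1 \<noteq> 0" using np unfolding parallel_def by (auto simp: algebra_simps)
  show "on_line (meetf L1 L2) L1" "on_line (meetf L1 L2) L2"
    unfolding on_line_def meetf_def fst_conv snd_conv
    by (rule frac_on[OF nz], simp add: algebra_simps)+
qed

lemma meet_formula:
  assumes np: "\<not> parallel L1 L2" shows "meet L1 L2 = meetf L1 L2"
  by (rule meet_unique[OF np meetf_on[OF np]])

lemma meet_on:
  assumes np: "\<not> parallel L1 L2" shows "on_line (meet L1 L2) L1" "on_line (meet L1 L2) L2"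
  using meetf_on[OF np] meet_formula[OF np] by auto

lemma meet_param:
  assumes np: "\<not> parallel l L" and m: "on_line m l"
  shows "meet l L = (fst m - lv L m / DD L (dirl l) * uL l, snd m - lv L m / DD L (dirl l) * tL l)"
proof (rule meet_unique[OF np])
  have nz: "DD L (dirl l) \<noteq> 0" using np parallel_DD by blast
  show "on_line (fst m - lv L m / DD L (dirl l) * uL l, snd m - lv L m / DD L (dirl l) * tL l) l"
    using m unfolding on_line_def by (simp add: algebra_simps)
  define s where "s = lv L m / DD L (dirl l)"
  have "tL L * (fst m - s * uL l) - uL L * (snd m - s * tL l) + vL L = lv L m - s * DD L (dirl l)"
    by (simp add: lv_def DD_def dirl_def algebra_simps)
  also have "s * DD L (dirl l) = lv L m" using nz s_def by simp
  finally show "on_line (fst m - lv L m / DD L (dirl l) * uL l, snd m - lv L m / DD L (dirl l) * tL l) L"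
    unfolding on_line_def s_def by simp
qed

lemma par_common_eq:
  assumes "is_line l" "is_line L" "parallel l L" "on_line p l" "on_line p L"
  shows "l = L"
proof -
  obtain t u v where l: "l = (t,u,v)" by (cases l) auto
  obtain t' u' v' where L: "L = (t',u',v')" by (cases L) auto
  have "(u = 0 \<and> t = 1) \<or> u = 1" "(u' = 0 \<and> t' = 1) \<or> u' = 1" "t * u' = u * t'"
    "t * fst p - u * snd p + v = 0" "t' * fst p - u' * snd p + v' = 0"
    using assms unfolding l L is_line_def parallel_def on_line_def tL_def uL_def vL_def by auto
  then have tu: "t = t' \<and> u = u'" by auto
  have "v = u * snd p - t * fst p" using \<open>t * fst p - u * snd p + v = 0\<close> by algebra
  moreover have "v' = u' * snd p - t' * fst p" using \<open>t' * fst p - u' * snd p + v' = 0\<close> by algebra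
  ultimately have "t = t' \<and> u = u' \<and> v = v'" using tu by simp
  then show ?thesis using l L by simp
qed



definition shift :: "('a::field) \<times> 'a \<Rightarrow> 'a \<Rightarrow> 'a line \<Rightarrow> 'a \<times> 'a" where
  "shift p s l = (fst p - s * uL l, snd p - s * tL l)"

lemma lv_shift: "lv L (shift p s l) = lv L p - s * DD L (dirl l)"
  unfolding lv_def shift_def DD_def dirl_def by (simp add: algebra_simps)

lemma DD_self: "DD l (dirl l) = 0"
  unfolding DD_def dirl_def by (simp add: mult.commute)

lemma meet_param':
  assumes np: "\<not> parallel l L" and m: "on_line m l"
  shows "meet l L = shift m (lv L m / DD L (dirl l)) l"
  using meet_param[OF assms] unfolding shift_def by simp

lemma midpt_shift:
  fixes p :: "'a::field \<times> 'a" and l :: "'a line"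
  assumes "(2::'a) \<noteq> 0"
  shows "midpt (shift p s1 l) (shift p s2 l) = shift p ((s1 + s2) / 2) l"
  unfolding midpt_def shift_def using assms by (simp add: field_simps)

lemma shift0: "shift p 0 l = p" unfolding shift_def by simp

lemma mid_fin_char:
  fixes l :: "('a::field) line"
  assumes two: "(2::'a) \<noteq> 0" and l: "is_line l"
    and n1: "\<not> parallel l L1" and n2: "\<not> parallel l L2"
  shows "midpt (meet l L1) (meet l L2) = m \<longleftrightarrow> on_line m l \<and> pe L1 L2 (dirl l) m = 0"
proof -
  have D1: "DD L1 (dirl l) \<noteq> 0" using n1 parallel_DD by blast
  have D2: "DD L2 (dirl l) \<noteq> 0" using n2 parallel_DD by blast
  show ?thesis
  proof
    assume mm: "midpt (meet l L1) (meet l L2) = m"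
    define p0 where "p0 = meet l L1"
    have p0l: "on_line p0 l" and p0L: "on_line p0 L1" using meet_on[OF n1] p0_def by auto
    define s2 where "s2 = lv L2 p0 / DD L2 (dirl l)"
    have m1: "meet l L1 = shift p0 0 l" unfolding p0_def shift0 by simp
    have m2: "meet l L2 = shift p0 s2 l" using meet_param'[OF n2 p0l] s2_def by simp
    have mform: "m = shift p0 (s2 / 2) l" using mm m1 m2 midpt_shift[OF two] by simp
    have "lv l m = 0" using p0l mform lv_shift[of l p0 "s2/2" l] DD_self[of l] by (simp add: on_line_lv)
    moreover have "lv L1 p0 = 0" using p0L on_line_lv by blast
    moreover have "s2 * DD L2 (dirl l) = lv L2 p0" using s2_def D2 by simp
    ultimately have "on_line m l \<and> pe L1 L2 (dirl l) m = 0"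
      unfolding pe_alt mform lv_shift on_line_lv
      by (simp add: algebra_simps) (simp add: field_simps two)
    then show "on_line m l \<and> pe L1 L2 (dirl l) m = 0" .
  next
    assume h: "on_line m l \<and> pe L1 L2 (dirl l) m = 0"
    define s1 where "s1 = lv L1 m / DD L1 (dirl l)"
    define s2 where "s2 = lv L2 m / DD L2 (dirl l)"
    have "meet l L1 = shift m s1 l" using meet_param'[OF n1] h s1_def by simp
    moreover have "meet l L2 = shift m s2 l" using meet_param'[OF n2] h s2_def by simp
    moreover have "s1 + s2 = 0"
    proof -
      have "s1 + s2 = pe L1 L2 (dirl l) m / (DD L1 (dirl l) * DD L2 (dirl l))"
        unfolding s1_def s2_def pe_alt using D1 D2 by (simp add: field_simps)
      then show ?thesis using h by simp
    qed
    ultimately show "midpt (meet l L1) (meet l L2) = m" using midpt_shift[OF two] shift0 by simp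
  qed
qed



lemma quadD:
  assumes "quadrilateral (A,B,C,E)"
  shows "is_line A" "is_line B" "is_line C" "is_line E" "distinct [A,B,C,E]"
    "\<not> parallel A B" "\<not> parallel B C" "\<not> parallel C E" "\<not> parallel E A"
    "\<not> (\<exists>p. on_line p A \<and> on_line p B \<and> on_line p C \<and> on_line p E)"
  using assms unfolding quadrilateral_def by auto

lemma bis_unfold:
  "bisector (A,B,C,E) l \<longleftrightarrow> is_line l \<and> (crosses l A C \<and> crosses l B E \<longrightarrow> mid A C l = mid B E l)"
  "bis_mid (A,B,C,E) l = (if crosses l A C then mid A C l else mid B E l)"
  unfolding bisector_def bis_mid_def by auto

lemma pe_par_zero:
  assumes "parallel l A" "parallel l C" shows "pe A C (dirl l) m = 0"
  using assms unfolding pe_alt parallel_DD by simp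

lemma pe_one_par:
  assumes "parallel l A" shows "pe A C (dirl l) m = DD C (dirl l) * lv A m"
  using assms unfolding pe_alt parallel_DD by simp

lemma char_side:
  fixes l A C :: "('a::field) line"
  assumes l: "is_line l" and A: "is_line A" and pA: "parallel l A" and npC: "\<not> parallel l C"
    and ml: "on_line m l"
  shows "pe A C (dirl l) m = 0 \<longleftrightarrow> l = A"
proof
  have DC: "DD C (dirl l) \<noteq> 0" using npC parallel_DD by blast
  assume "pe A C (dirl l) m = 0"
  then have "lv A m = 0" using pe_one_par[OF pA] DC by simp
  then show "l = A" using par_common_eq[OF l A pA ml] on_line_lv by blast
next
  assume "l = A"
  then show "pe A C (dirl l) m = 0" using pe_one_par[OF pA] ml by (simp add: on_line_lv)
qed

lemma char_core:
  fixes A B C E l :: "('a::field) line"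
  assumes two: "(2::'a) \<noteq> 0" and Q: "quadrilateral (A,B,C,E)" and l: "is_line l"
    and nB: "\<not> parallel l B" and nE: "\<not> parallel l E"
  shows "(bisector (A,B,C,E) l \<and> bis_mid (A,B,C,E) l = Fin m) \<longleftrightarrow>
           (on_line m l \<and> pe A C (dirl l) m = 0 \<and> pe B E (dirl l) m = 0)"
    and "bisector (A,B,C,E) l \<Longrightarrow> \<exists>m. bis_mid (A,B,C,E) l = Fin m"
proof -
  note q = quadD[OF Q]
  have lB: "l \<noteq> B" using nB parallel_refl by metis
  have lE: "l \<noteq> E" using nE parallel_refl by metis
  have cBE: "crosses l B E" unfolding crosses_def using lB lE nB by auto
  have mBE: "mid B E l = Fin (midpt (meet l B) (meet l E))" unfolding mid_def using nB nE by simp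
  have chBE: "midpt (meet l B) (meet l E) = m \<longleftrightarrow> on_line m l \<and> pe B E (dirl l) m = 0"
    by (rule mid_fin_char[OF two l nB nE])
  consider (gen) "\<not> parallel l A" "\<not> parallel l C" | (both) "parallel l A" "parallel l C"
    | (oA) "parallel l A" "\<not> parallel l C" | (oC) "\<not> parallel l A" "parallel l C" by blast
  then have "((bisector (A,B,C,E) l \<and> bis_mid (A,B,C,E) l = Fin m) \<longleftrightarrow>
           (on_line m l \<and> pe A C (dirl l) m = 0 \<and> pe B E (dirl l) m = 0)) \<and>
         (bisector (A,B,C,E) l \<longrightarrow> (\<exists>m. bis_mid (A,B,C,E) l = Fin m))"
  proof cases
    case gen
    have lA: "l \<noteq> A" using gen parallel_refl by metis
    have lC: "l \<noteq> C" using gen parallel_refl by metis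
    have cAC: "crosses l A C" unfolding crosses_def using lA lC gen by auto
    have mAC: "mid A C l = Fin (midpt (meet l A) (meet l C))" unfolding mid_def using gen by simp
    have chAC: "midpt (meet l A) (meet l C) = m \<longleftrightarrow> on_line m l \<and> pe A C (dirl l) m = 0"
      by (rule mid_fin_char[OF two l gen])
    show ?thesis unfolding bis_unfold using l cAC cBE mAC mBE chAC chBE by auto
  next
    case both
    have ncAC: "\<not> crosses l A C" unfolding crosses_def using both by auto
    show ?thesis unfolding bis_unfold using l ncAC mBE chBE pe_par_zero[OF both] by auto
  next
    case oA
    show ?thesis
    proof (cases "l = A")
      case True
      have ncAC: "\<not> crosses l A C" unfolding crosses_def using True by auto
      have hc: "on_line m l \<Longrightarrow> pe A C (dirl l) m = 0" using char_side[OF l q(1) oA] True by blast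
      have bis: "bisector (A,B,C,E) l" by (simp add: bis_unfold l ncAC)
      have bm: "bis_mid (A,B,C,E) l = Fin (midpt (meet l B) (meet l E))" by (simp add: bis_unfold ncAC mBE)
      show ?thesis using bis bm chBE hc by auto
    next
      case False
      have lC: "l \<noteq> C" using oA parallel_refl by metis
      have cAC: "crosses l A C" unfolding crosses_def using False lC oA by auto
      have mAC: "mid A C l = inf_pt l" unfolding mid_def using oA by simp
      have hc: "on_line m l \<Longrightarrow> pe A C (dirl l) m \<noteq> 0" using char_side[OF l q(1) oA] False by blast
      have nb: "\<not> bisector (A,B,C,E) l" using cAC cBE mAC mBE by (simp add: bis_unfold inf_pt_def)
      show ?thesis using nb hc by blast
    qed
  next
    case oC
    show ?thesis
    proof (cases "l = C")
      case True
      have ncAC: "\<not> crosses l A C" unfolding crosses_def using True by auto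
      have hc: "on_line m l \<Longrightarrow> pe A C (dirl l) m = 0" using char_side[OF l q(3) oC(2) oC(1)] True pe_sym by metis
      have bis: "bisector (A,B,C,E) l" by (simp add: bis_unfold l ncAC)
      have bm: "bis_mid (A,B,C,E) l = Fin (midpt (meet l B) (meet l E))" by (simp add: bis_unfold ncAC mBE)
      show ?thesis using bis bm chBE hc by auto
    next
      case False
      have lA: "l \<noteq> A" using oC parallel_refl by metis
      have cAC: "crosses l A C" unfolding crosses_def using False lA oC by auto
      have mAC: "mid A C l = inf_pt l" unfolding mid_def using oC by simp
      have hc: "on_line m l \<Longrightarrow> pe A C (dirl l) m \<noteq> 0" using char_side[OF l q(3) oC(2) oC(1)] False pe_sym by metis
      have nb: "\<not> bisector (A,B,C,E) l" using cAC cBE mAC mBE by (simp add: bis_unfold inf_pt_def)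
      show ?thesis using nb hc by blast
    qed
  qed
  then show "(bisector (A,B,C,E) l \<and> bis_mid (A,B,C,E) l = Fin m) \<longleftrightarrow>
           (on_line m l \<and> pe A C (dirl l) m = 0 \<and> pe B E (dirl l) m = 0)"
    and "bisector (A,B,C,E) l \<Longrightarrow> \<exists>m. bis_mid (A,B,C,E) l = Fin m" by blast+
qed



lemma par_adj:
  assumes Q: "quadrilateral (A,B,C,E)" and l: "is_line l"
    and "parallel l A \<or> parallel l C" and "parallel l B \<or> parallel l E"
  shows False
proof -
  note q = quadD[OF Q]
  have s: "\<not> parallel A B" "\<not> parallel C B" "\<not> parallel A E" "\<not> parallel C E"
    using q parallel_sym by blast+
  have "parallel A B \<or> parallel C B \<or> parallel A E \<or> parallel C E"
    using assms(3,4) par_trans[OF l, of A B] par_trans[OF l, of C B] par_trans[OF l, of A E] par_trans[OF l, of C E]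
    by blast
  then show False using s by blast
qed

lemma crosses_some:
  assumes Q: "quadrilateral (A,B,C,E)" and l: "is_line l"
  shows "crosses l A C \<or> crosses l B E"
proof (rule ccontr)
  assume "\<not> (crosses l A C \<or> crosses l B E)"
  then have "parallel l A \<or> parallel l C" "parallel l B \<or> parallel l E"
    unfolding crosses_def using parallel_refl by metis+
  then show False using par_adj[OF Q l] by blast
qed

lemma quad_swap:
  assumes Q: "quadrilateral (A,B,C,E)" shows "quadrilateral (B,A,E,C)"
proof -
  note q = quadD[OF Q]
  have s: "\<not> parallel B A" "\<not> parallel A E" "\<not> parallel E C" "\<not> parallel C B"
    using q parallel_sym by blast+
  have np: "\<not> (\<exists>p. on_line p B \<and> on_line p A \<and> on_line p E \<and> on_line p C)" using q(10) by blast
  show ?thesis unfolding quadrilateral_def using q(1-5) s np by auto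
qed

lemma bis_swap:
  assumes Q: "quadrilateral (A,B,C,E)" and l: "is_line l"
  shows "bisector (B,A,E,C) l \<longleftrightarrow> bisector (A,B,C,E) l"
    and "bisector (A,B,C,E) l \<Longrightarrow> bis_mid (B,A,E,C) l = bis_mid (A,B,C,E) l"
proof -
  show "bisector (B,A,E,C) l \<longleftrightarrow> bisector (A,B,C,E) l" unfolding bis_unfold by auto
  assume b: "bisector (A,B,C,E) l"
  show "bis_mid (B,A,E,C) l = bis_mid (A,B,C,E) l"
    using crosses_some[OF Q l] b unfolding bis_unfold by auto
qed

lemma char_full:
  fixes A B C E l :: "('a::field) line"
  assumes two: "(2::'a) \<noteq> 0" and Q: "quadrilateral (A,B,C,E)" and l: "is_line l"
  shows "(bisector (A,B,C,E) l \<and> bis_mid (A,B,C,E) l = Fin m) \<longleftrightarrow>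
           (on_line m l \<and> pe A C (dirl l) m = 0 \<and> pe B E (dirl l) m = 0)"
    and "bisector (A,B,C,E) l \<Longrightarrow> \<exists>m. bis_mid (A,B,C,E) l = Fin m"
proof -
  have "((bisector (A,B,C,E) l \<and> bis_mid (A,B,C,E) l = Fin m) \<longleftrightarrow>
           (on_line m l \<and> pe A C (dirl l) m = 0 \<and> pe B E (dirl l) m = 0)) \<and>
        (bisector (A,B,C,E) l \<longrightarrow> (\<exists>m. bis_mid (A,B,C,E) l = Fin m))"
  proof (cases "\<not> parallel l B \<and> \<not> parallel l E")
    case True
    then show ?thesis using char_core[OF two Q l] by blast
  next
    case False
    then have nA: "\<not> parallel l A" "\<not> parallel l C" using par_adj[OF Q l] by blast+
    note Q' = quad_swap[OF Q]
    note c = char_core[OF two Q' l nA]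
    have e1: "bisector (B,A,E,C) l \<longleftrightarrow> bisector (A,B,C,E) l" using bis_swap(1)[OF Q l] .
    have e2: "bisector (A,B,C,E) l \<Longrightarrow> bis_mid (B,A,E,C) l = bis_mid (A,B,C,E) l"
      using bis_swap(2)[OF Q l] .
    have "(bisector (A,B,C,E) l \<and> bis_mid (A,B,C,E) l = Fin m) \<longleftrightarrow>
          (bisector (B,A,E,C) l \<and> bis_mid (B,A,E,C) l = Fin m)" using e1 e2 by auto
    moreover have "bisector (A,B,C,E) l \<longrightarrow> (\<exists>m. bis_mid (A,B,C,E) l = Fin m)"
      using c(2) e1 e2 by auto
    ultimately show ?thesis using c(1) by auto
  qed
  then show "(bisector (A,B,C,E) l \<and> bis_mid (A,B,C,E) l = Fin m) \<longleftrightarrow>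
           (on_line m l \<and> pe A C (dirl l) m = 0 \<and> pe B E (dirl l) m = 0)"
    and "bisector (A,B,C,E) l \<Longrightarrow> \<exists>m. bis_mid (A,B,C,E) l = Fin m" by blast+
qed



definition qq :: "('a::field) line \<Rightarrow> 'a line \<Rightarrow> 'a line \<Rightarrow> 'a line \<Rightarrow> 'a \<times> 'a \<Rightarrow> 'a" where
  "qq A B C E d = pax A C d * pay B E d - pay A C d * pax B E d"
definition NX :: "('a::field) line \<Rightarrow> 'a line \<Rightarrow> 'a line \<Rightarrow> 'a line \<Rightarrow> 'a \<times> 'a \<Rightarrow> 'a" where
  "NX A B C E d = pb B E d * pay A C d - pb A C d * pay B E d"
definition NY :: "('a::field) line \<Rightarrow> 'a line \<Rightarrow> 'a line \<Rightarrow> 'a line \<Rightarrow> 'a \<times> 'a \<Rightarrow> 'a" where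
  "NY A B C E d = pb A C d * pax B E d - pb B E d * pax A C d"
definition Qf :: "('a::field) quad \<Rightarrow> 'a \<times> 'a \<Rightarrow> 'a" where
  "Qf Q d = qgamma Q * fst d ^ 2 - 2 * qbeta Q * fst d * snd d + qalpha Q * snd d ^ 2"
definition qdet :: "('a::field) quad \<Rightarrow> 'a" where
  "qdet Q = qalpha Q * qgamma Q - qbeta Q ^ 2"
definition rot :: "('a::field) quad \<Rightarrow> 'a \<times> 'a \<Rightarrow> 'a \<times> 'a" where
  "rot Q d = (qbeta Q * fst d - qalpha Q * snd d, qgamma Q * fst d - qbeta Q * snd d)"
definition Tf :: "('a::field) quad \<Rightarrow> ('a \<times> 'a \<Rightarrow> 'a) \<Rightarrow> 'a" where
  "Tf Q f = qalpha Q * f (1,0) + qbeta Q * (f (1,1) - f (1,0) - f (0,1)) + qgamma Q * f (0,1)"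
definition XX :: "('a::field) line \<Rightarrow> 'a line \<Rightarrow> 'a" where
  "XX P R = tL P * uL R - uL P * tL R"

lemmas abc_defs = qalpha_def qbeta_def qgamma_def

lemma H1: "qdet (A,B,C,E) = - (XX A B * XX B C * XX C E * XX E A)"
  unfolding qdet_def abc_defs XX_def by (simp add: algebra_simps power2_eq_square)

lemma XX_par: "XX P R = 0 \<longleftrightarrow> parallel P R"
  unfolding XX_def parallel_def by simp

lemma qdet_nz: assumes "quadrilateral (A,B,C,E)" shows "qdet (A,B,C,E) \<noteq> 0"
  using quadD[OF assms] unfolding H1 by (simp add: XX_par)

lemma H2: "qq A B C E d = - 2 * Qf (A,B,C,E) d"
  unfolding qq_def Qf_def abc_defs pax_def pay_def DD_def by (simp add: algebra_simps power2_eq_square)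

lemma NX_form: "NX A B C E (u,t) = NX A B C E (1,0) * u^2 + (NX A B C E (1,1) - NX A B C E (1,0) - NX A B C E (0,1)) * u * t + NX A B C E (0,1) * t^2"
  unfolding NX_def pax_def pay_def pb_def DD_def by (simp add: algebra_simps power2_eq_square)

lemma NY_form: "NY A B C E (u,t) = NY A B C E (1,0) * u^2 + (NY A B C E (1,1) - NY A B C E (1,0) - NY A B C E (0,1)) * u * t + NY A B C E (0,1) * t^2"
  unfolding NY_def pax_def pay_def pb_def DD_def by (simp add: algebra_simps power2_eq_square)

lemma qq_form: "qq A B C E (u,t) = qq A B C E (1,0) * u^2 + (qq A B C E (1,1) - qq A B C E (1,0) - qq A B C E (0,1)) * u * t + qq A B C E (0,1) * t^2"
  unfolding qq_def pax_def pay_def pb_def DD_def by (simp add: algebra_simps power2_eq_square)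

lemma rot_form:
  fixes al be ga r1 r2 r3 u t :: "'a::field"
  shows "r1 * (be * u - al * t)^2 + r2 * (be * u - al * t) * (ga * u - be * t) + r3 * (ga * u - be * t)^2
    = (al * r1 + be * r2 + ga * r3) * (ga * u^2 - 2 * be * u * t + al * t^2)
      - (al * ga - be^2) * (r1 * u^2 + r2 * u * t + r3 * t^2)"
  by (simp add: algebra_simps power2_eq_square)

lemma Qf_rot: "Qf Q (rot Q d) = qdet Q * Qf Q d"
  unfolding Qf_def rot_def qdet_def by (simp add: algebra_simps power2_eq_square)

lemma cramer1: "pax A C d * NX A B C E d + pay A C d * NY A B C E d + pb A C d * qq A B C E d = 0"
  unfolding NX_def NY_def qq_def by (simp add: algebra_simps)
lemma cramer2: "pax B E d * NX A B C E d + pay B E d * NY A B C E d + pb B E d * qq A B C E d = 0"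
  unfolding NX_def NY_def qq_def by (simp add: algebra_simps)

lemma sol_id:
  "NX A B C E d - qq A B C E d * fst m = pe B E d m * pay A C d - pe A C d m * pay B E d"
  "NY A B C E d - qq A B C E d * snd m = pe A C d m * pax B E d - pe B E d m * pax A C d"
  unfolding NX_def NY_def qq_def pe_def by (simp_all add: algebra_simps)

lemma sol:
  assumes "pe A C d m = 0" "pe B E d m = 0"
  shows "NX A B C E d = qq A B C E d * fst m" "NY A B C E d = qq A B C E d * snd m"
  using sol_id[of A B C E d m] assms by simp_all



lemma TNX: "Tf (A,B,C,E) (NX A B C E) = - (
     (vL A * uL B - uL A * vL B) * XX B C * XX C E * XX E A
   + XX A B * (vL B * uL C - uL B * vL C) * XX C E * XX E A
   + XX A B * XX B C * (vL C * uL E - uL C * vL E) * XX E A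
   + XX A B * XX B C * XX C E * (vL E * uL A - uL E * vL A))"
  unfolding Tf_def abc_defs XX_def NX_def pb_def pay_def pax_def DD_def by (simp add: algebra_simps)

lemma TNY: "Tf (A,B,C,E) (NY A B C E) = - (
     (vL A * tL B - tL A * vL B) * XX B C * XX C E * XX E A
   + XX A B * (vL B * tL C - tL B * vL C) * XX C E * XX E A
   + XX A B * XX B C * (vL C * tL E - tL C * vL E) * XX E A
   + XX A B * XX B C * XX C E * (vL E * tL A - tL E * vL A))"
  unfolding Tf_def abc_defs XX_def NY_def pb_def pay_def pax_def DD_def by (simp add: algebra_simps)

lemma Tqq: "Tf (A,B,C,E) (qq A B C E) = 4 * (XX A B * XX B C * XX C E * XX E A)"
proof -
  have "Tf (A,B,C,E) (qq A B C E) = - 4 * qdet (A,B,C,E)"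
    unfolding Tf_def H2 Qf_def qdet_def by (simp add: algebra_simps power2_eq_square)
  then show ?thesis unfolding H1 by simp
qed

lemma sum4:
  fixes n1 n2 n3 n4 X1 X2 X3 X4 :: "'a::field"
  assumes "X1 \<noteq> 0" "X2 \<noteq> 0" "X3 \<noteq> 0" "X4 \<noteq> 0" "(4::'a) \<noteq> 0"
  shows "- (n1*X2*X3*X4 + X1*n2*X3*X4 + X1*X2*n3*X4 + X1*X2*X3*n4) =
     ((n1/(-X1) + n2/(-X2) + n3/(-X3) + n4/(-X4))/4) * (4 * (X1*X2*X3*X4))"
  using assms by (simp add: field_simps)

lemma meetf_XX:
  "meetf P R = ((vL P * uL R - uL P * vL R) / (- XX P R), (vL P * tL R - tL P * vL R) / (- XX P R))"
  unfolding meetf_def XX_def by (simp add: algebra_simps)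

lemma centroid_eq:
  assumes Q: "quadrilateral (A,B,C,E)"
  shows "centroid (A,B,C,E) =
    ((fst (meetf A B) + fst (meetf B C) + fst (meetf C E) + fst (meetf E A)) / 4,
     (snd (meetf A B) + snd (meetf B C) + snd (meetf C E) + snd (meetf E A)) / 4)"
  using quadD[OF Q] by (simp add: centroid_def Let_def meet_formula)

lemma H3:
  fixes A B C E :: "('a::field) line"
  assumes two: "(2::'a) \<noteq> 0" and Q: "quadrilateral (A,B,C,E)"
  shows "Tf (A,B,C,E) (NX A B C E) = fst (centroid (A,B,C,E)) * Tf (A,B,C,E) (qq A B C E)"
    and "Tf (A,B,C,E) (NY A B C E) = snd (centroid (A,B,C,E)) * Tf (A,B,C,E) (qq A B C E)"
proof -
  note q = quadD[OF Q]
  have X: "XX A B \<noteq> 0" "XX B C \<noteq> 0" "XX C E \<noteq> 0" "XX E A \<noteq> 0" using q XX_par by blast+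
  have f4: "(4::'a) = 2 * 2" by simp
  have four: "(4::'a) \<noteq> 0" unfolding f4 by (rule no_zero_divisors[OF two two])
  show "Tf (A,B,C,E) (NX A B C E) = fst (centroid (A,B,C,E)) * Tf (A,B,C,E) (qq A B C E)"
    unfolding TNX Tqq centroid_eq[OF Q] meetf_XX fst_conv by (rule sum4[OF X four])
  show "Tf (A,B,C,E) (NY A B C E) = snd (centroid (A,B,C,E)) * Tf (A,B,C,E) (qq A B C E)"
    unfolding TNY Tqq centroid_eq[OF Q] meetf_XX snd_conv fst_conv by (rule sum4[OF X four])
qed



lemma key_gen:
  fixes n1 n2 n3 q1 q2 q3 cx al be ga u t :: "'a::field"
  assumes T: "al * n1 + be * n2 + ga * n3 = cx * (al * q1 + be * q2 + ga * q3)"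
    and Qrot: "q1 * (be * u - al * t)^2 + q2 * (be * u - al * t) * (ga * u - be * t) + q3 * (ga * u - be * t)^2
       = (al * ga - be^2) * (q1 * u^2 + q2 * u * t + q3 * t^2)"
  shows "n1 * (be * u - al * t)^2 + n2 * (be * u - al * t) * (ga * u - be * t) + n3 * (ga * u - be * t)^2
       = (al * ga - be^2) * (2 * cx * (q1 * u^2 + q2 * u * t + q3 * t^2) - (n1 * u^2 + n2 * u * t + n3 * t^2))"
proof -
  define u' where "u' = be * u - al * t"
  define t' where "t' = ga * u - be * t"
  have T0: "al * (n1 - cx * q1) + be * (n2 - cx * q2) + ga * (n3 - cx * q3) = 0"
    using T by (simp add: algebra_simps)
  have R0: "(n1 - cx * q1) * u'^2 + (n2 - cx * q2) * u' * t' + (n3 - cx * q3) * t'^2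
      = (al * (n1 - cx * q1) + be * (n2 - cx * q2) + ga * (n3 - cx * q3)) * (ga * u^2 - 2 * be * u * t + al * t^2)
      - (al * ga - be^2) * ((n1 - cx * q1) * u^2 + (n2 - cx * q2) * u * t + (n3 - cx * q3) * t^2)"
    unfolding u'_def t'_def by (rule rot_form)
  have R: "(n1 - cx * q1) * u'^2 + (n2 - cx * q2) * u' * t' + (n3 - cx * q3) * t'^2
      = - ((al * ga - be^2) * ((n1 - cx * q1) * u^2 + (n2 - cx * q2) * u * t + (n3 - cx * q3) * t^2))"
    using R0 T0 by simp
  have "n1 * u'^2 + n2 * u' * t' + n3 * t'^2 =
     ((n1 - cx * q1) * u'^2 + (n2 - cx * q2) * u' * t' + (n3 - cx * q3) * t'^2)
     + cx * (q1 * u'^2 + q2 * u' * t' + q3 * t'^2)" by (simp add: algebra_simps)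
  also have "\<dots> = - ((al * ga - be^2) * ((n1 - cx * q1) * u^2 + (n2 - cx * q2) * u * t + (n3 - cx * q3) * t^2))
     + cx * ((al * ga - be^2) * (q1 * u^2 + q2 * u * t + q3 * t^2))"
    using R Qrot unfolding u'_def t'_def by simp
  also have "\<dots> = (al * ga - be^2) * (2 * cx * (q1 * u^2 + q2 * u * t + q3 * t^2) - (n1 * u^2 + n2 * u * t + n3 * t^2))"
    by (simp add: algebra_simps)
  finally show ?thesis unfolding u'_def t'_def .
qed

lemma qq_rot: "qq A B C E (rot (A,B,C,E) d) = qdet (A,B,C,E) * qq A B C E d"
  unfolding H2 Qf_rot by simp

lemma KEY:
  fixes A B C E :: "('a::field) line"
  assumes two: "(2::'a) \<noteq> 0" and Q: "quadrilateral (A,B,C,E)"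
  shows "NX A B C E (rot (A,B,C,E) d) = qdet (A,B,C,E) * (2 * fst (centroid (A,B,C,E)) * qq A B C E d - NX A B C E d)"
    and "NY A B C E (rot (A,B,C,E) d) = qdet (A,B,C,E) * (2 * snd (centroid (A,B,C,E)) * qq A B C E d - NY A B C E d)"
proof -
  obtain u t where d: "d = (u,t)" by (cases d) auto
  let ?Q = "(A,B,C,E)"
  let ?al = "qalpha ?Q" and ?be = "qbeta ?Q" and ?ga = "qgamma ?Q"
  let ?q = "qq A B C E"
  have rd: "rot ?Q (u,t) = (?be * u - ?al * t, ?ga * u - ?be * t)" unfolding rot_def by simp
  have dq: "qdet ?Q = ?al * ?ga - ?be^2" unfolding qdet_def by simp
  have Qrot: "?q (1,0) * (?be * u - ?al * t)^2 + (?q (1,1) - ?q (1,0) - ?q (0,1)) * (?be * u - ?al * t) * (?ga * u - ?be * t) + ?q (0,1) * (?ga * u - ?be * t)^2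
       = (?al * ?ga - ?be^2) * (?q (1,0) * u^2 + (?q (1,1) - ?q (1,0) - ?q (0,1)) * u * t + ?q (0,1) * t^2)"
    using qq_rot[of A B C E d] unfolding d rd dq
    by (metis qq_form d)
  show "NX A B C E (rot ?Q d) = qdet ?Q * (2 * fst (centroid ?Q) * ?q d - NX A B C E d)"
  proof -
    let ?n = "NX A B C E"
    have T: "?al * ?n (1,0) + ?be * (?n (1,1) - ?n (1,0) - ?n (0,1)) + ?ga * ?n (0,1)
       = fst (centroid ?Q) * (?al * ?q (1,0) + ?be * (?q (1,1) - ?q (1,0) - ?q (0,1)) + ?ga * ?q (0,1))"
      using H3(1)[OF two Q] unfolding Tf_def .
    show ?thesis unfolding d rd dq NX_form[of A B C E "?be * u - ?al * t"] NX_form[of A B C E u t] qq_form[of A B C E u t]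
      by (rule key_gen[OF T Qrot])
  qed
  show "NY A B C E (rot ?Q d) = qdet ?Q * (2 * snd (centroid ?Q) * ?q d - NY A B C E d)"
  proof -
    let ?n = "NY A B C E"
    have T: "?al * ?n (1,0) + ?be * (?n (1,1) - ?n (1,0) - ?n (0,1)) + ?ga * ?n (0,1)
       = snd (centroid ?Q) * (?al * ?q (1,0) + ?be * (?q (1,1) - ?q (1,0) - ?q (0,1)) + ?ga * ?q (0,1))"
      using H3(2)[OF two Q] unfolding Tf_def .
    show ?thesis unfolding d rd dq NY_form[of A B C E "?be * u - ?al * t"] NY_form[of A B C E u t] qq_form[of A B C E u t]
      by (rule key_gen[OF T Qrot])
  qed
qed



lemma mixed_disc:
  fixes wa wb wc al be ga u t ha hb :: "'a::field"
  shows "2 * (al*wa + be*wb + ga*wc) * (u*hb - t*ha)^2 =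
    2 * (ga*ha^2 - 2*be*ha*hb + al*hb^2) * (wa*u^2 + wb*u*t + wc*t^2)
  - (2*ga*u*ha - 2*be*(u*hb + t*ha) + 2*al*t*hb) * (2*wa*u*ha + wb*(u*hb + t*ha) + 2*wc*t*hb)
  + 2 * (ga*u^2 - 2*be*u*t + al*t^2) * (wa*ha^2 + wb*ha*hb + wc*hb^2)"
  by (simp add: algebra_simps power2_eq_square)

lemma iso_core:
  fixes ax1 ax2 ay1 ay2 b1 b2 cx cy w1 w2 w3 z1 z2 z3 al be ga u0 t0 :: "'a::field"
  assumes two: "(2::'a) \<noteq> 0" and det: "al*ga - be^2 \<noteq> 0"
    and P: "\<And>u t. (-2*(ga*u^2 - 2*be*u*t + al*t^2)) * ((ax1*u + ax2*t)*cx + (ay1*u + ay2*t)*cy + (b1*u + b2*t))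
      + (ax1*u + ax2*t)*(w1*u^2 + w2*u*t + w3*t^2) + (ay1*u + ay2*t)*(z1*u^2 + z2*u*t + z3*t^2) = 0"
    and apW: "al*w1 + be*w2 + ga*w3 = 0" and apZ: "al*z1 + be*z2 + ga*z3 = 0"
    and iso: "ga*u0^2 - 2*be*u0*t0 + al*t0^2 = 0"
    and nz: "u0 \<noteq> 0 \<or> t0 \<noteq> 0"
    and W0: "w1*u0^2 + w2*u0*t0 + w3*t0^2 = 0" and Z0: "z1*u0^2 + z2*u0*t0 + z3*t0^2 = 0"
  shows "(ax1*u0 + ax2*t0)*cx + (ay1*u0 + ay2*t0)*cy + (b1*u0 + b2*t0) = 0"
proof -
  have Md: "ga*u0 - be*t0 \<noteq> 0 \<or> -be*u0 + al*t0 \<noteq> 0"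
  proof (rule ccontr)
    assume "\<not> ?thesis"
    then have e: "ga*u0 - be*t0 = 0" "-be*u0 + al*t0 = 0" by auto
    have "(al*ga - be^2) * u0 = al*(ga*u0 - be*t0) + be*(-be*u0 + al*t0)" by (simp add: algebra_simps power2_eq_square)
    then have "u0 = 0" using e det by simp
    have "(al*ga - be^2) * t0 = be*(ga*u0 - be*t0) + ga*(-be*u0 + al*t0)" by (simp add: algebra_simps power2_eq_square)
    then have "t0 = 0" using e det by simp
    then show False using nz \<open>u0 = 0\<close> by simp
  qed
  obtain h1 h2 :: 'a where hq: "(ga*u0 - be*t0)*h1 + (-be*u0 + al*t0)*h2 \<noteq> 0"
    using Md by (metis add.right_neutral add_0 mult.right_neutral mult_zero_right)
  define Qp where "Qp = 2*ga*u0*h1 - 2*be*(u0*h2 + t0*h1) + 2*al*t0*h2"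
  have Qp2: "Qp = 2 * ((ga*u0 - be*t0)*h1 + (-be*u0 + al*t0)*h2)" unfolding Qp_def by (simp add: algebra_simps)
  have Qpnz: "Qp \<noteq> 0" unfolding Qp2 by (rule no_zero_divisors[OF two hq])
  have Wp: "2*w1*u0*h1 + w2*(u0*h2 + t0*h1) + 2*w3*t0*h2 = 0"
  proof -
    have "Qp * (2*w1*u0*h1 + w2*(u0*h2 + t0*h1) + 2*w3*t0*h2) = 0"
      using mixed_disc[where wa=w1 and wb=w2 and wc=w3 and al=al and be=be and ga=ga and u=u0 and t=t0 and ha=h1 and hb=h2] apW W0 iso unfolding Qp_def by simp
    then show ?thesis using Qpnz by simp
  qed
  have Zp: "2*z1*u0*h1 + z2*(u0*h2 + t0*h1) + 2*z3*t0*h2 = 0"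
  proof -
    have "Qp * (2*z1*u0*h1 + z2*(u0*h2 + t0*h1) + 2*z3*t0*h2) = 0"
      using mixed_disc[where wa=z1 and wb=z2 and wc=z3 and al=al and be=be and ga=ga and u=u0 and t=t0 and ha=h1 and hb=h2] apZ Z0 iso unfolding Qp_def by simp
    then show ?thesis using Qpnz by simp
  qed
  define Pf where "Pf = (\<lambda>u t. (-2*(ga*u^2 - 2*be*u*t + al*t^2)) * ((ax1*u + ax2*t)*cx + (ay1*u + ay2*t)*cy + (b1*u + b2*t))
      + (ax1*u + ax2*t)*(w1*u^2 + w2*u*t + w3*t^2) + (ay1*u + ay2*t)*(z1*u^2 + z2*u*t + z3*t^2))"
  have P': "Pf u t = 0" for u t unfolding Pf_def using P by simp
  have pid: "Pf (u0+h1) (t0+h2) - Pf (u0-h1) (t0-h2) - 2 * Pf h1 h2 =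
     2 * (-2*(ga*u0^2 - 2*be*u0*t0 + al*t0^2)) * ((ax1*h1 + ax2*h2)*cx + (ay1*h1 + ay2*h2)*cy + (b1*h1 + b2*h2))
   - 4 * Qp * ((ax1*u0 + ax2*t0)*cx + (ay1*u0 + ay2*t0)*cy + (b1*u0 + b2*t0))
   + 2 * (ax1*u0 + ax2*t0) * (2*w1*u0*h1 + w2*(u0*h2 + t0*h1) + 2*w3*t0*h2)
   + 2 * (ay1*u0 + ay2*t0) * (2*z1*u0*h1 + z2*(u0*h2 + t0*h1) + 2*z3*t0*h2)
   + 2 * (ax1*h1 + ax2*h2) * (w1*u0^2 + w2*u0*t0 + w3*t0^2)
   + 2 * (ay1*h1 + ay2*h2) * (z1*u0^2 + z2*u0*t0 + z3*t0^2)"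
    unfolding Pf_def Qp_def by (simp add: algebra_simps power2_eq_square)
  have "- 4 * Qp * ((ax1*u0 + ax2*t0)*cx + (ay1*u0 + ay2*t0)*cy + (b1*u0 + b2*t0)) = 0"
    using pid unfolding P' by (simp only: iso Wp Zp W0 Z0) simp
  moreover have "(4::'a) \<noteq> 0" using no_zero_divisors[OF two two] by simp
  ultimately show ?thesis using Qpnz by simp
qed



lemma pax_lin: "pax L1 L2 (u,t) = pax L1 L2 (1,0) * u + pax L1 L2 (0,1) * t"
  unfolding pax_def DD_def by (simp add: algebra_simps)
lemma pay_lin: "pay L1 L2 (u,t) = pay L1 L2 (1,0) * u + pay L1 L2 (0,1) * t"
  unfolding pay_def DD_def by (simp add: algebra_simps)
lemma pb_lin: "pb L1 L2 (u,t) = pb L1 L2 (1,0) * u + pb L1 L2 (0,1) * t"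
  unfolding pb_def DD_def by (simp add: algebra_simps)

lemma pe_scale: "pe L1 L2 (k * u, k * t) m = k * pe L1 L2 (u,t) m"
  unfolding pe_def pax_def pay_def pb_def DD_def by (simp add: algebra_simps)

lemma pe_affine: "pe L1 L2 d (2 * fst c - fst m, 2 * snd c - snd m) = 2 * pe L1 L2 d c - pe L1 L2 d m"
  unfolding pe_def by (simp add: algebra_simps)

lemma lin_par_zero:
  fixes f1 f2 u t x y :: "'a::field"
  assumes "f1 * u + f2 * t = 0" "u \<noteq> 0 \<or> t \<noteq> 0" "x * t - y * u = 0"
  shows "f1 * x + f2 * y = 0"
proof -
  have "u * (f1 * x + f2 * y) = x * (f1 * u + f2 * t) - f2 * (x * t - y * u)" by (simp add: algebra_simps)
  then have a: "u * (f1 * x + f2 * y) = 0" using assms by simp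
  have "t * (f1 * x + f2 * y) = y * (f1 * u + f2 * t) + f1 * (x * t - y * u)" by (simp add: algebra_simps)
  then have b: "t * (f1 * x + f2 * y) = 0" using assms by simp
  show ?thesis using a b assms(2) by auto
qed

lemma lin_dep:
  fixes a b x1 y1 x2 y2 :: "'a::field"
  assumes "a \<noteq> 0 \<or> b \<noteq> 0" "a * x1 + b * y1 = 0" "a * x2 + b * y2 = 0"
  shows "x1 * y2 = y1 * x2"
proof -
  have "a * (x1 * y2 - y1 * x2) = y2 * (a * x1 + b * y1) - y1 * (a * x2 + b * y2)" by (simp add: algebra_simps)
  then have A: "a * (x1 * y2 - y1 * x2) = 0" using assms by simp
  have "b * (x1 * y2 - y1 * x2) = x1 * (a * x2 + b * y2) - x2 * (a * x1 + b * y1)" by (simp add: algebra_simps)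
  then have B: "b * (x1 * y2 - y1 * x2) = 0" using assms by simp
  show ?thesis using A B assms(1) by auto
qed

lemma mkline:
  fixes x y :: "'a::field"
  assumes "x \<noteq> 0 \<or> y \<noteq> 0"
  shows "\<exists>l' k. is_line l' \<and> on_line p l' \<and> k \<noteq> 0 \<and> dirl l' = (k * x, k * y)"
proof (cases "x = 0")
  case True
  then have y: "y \<noteq> 0" using assms by simp
  let ?l = "(1::'a, 0::'a, - fst p)"
  have "is_line ?l \<and> on_line p ?l \<and> 1 / y \<noteq> 0 \<and> dirl ?l = (1 / y * x, 1 / y * y)"
    using True y unfolding is_line_def on_line_def dirl_def tL_def uL_def vL_def by simp
  then show ?thesis by blast
next
  case False
  let ?l = "(y / x, 1::'a, - (y / x * fst p - snd p))"
  have "is_line ?l \<and> on_line p ?l \<and> 1 / x \<noteq> 0 \<and> dirl ?l = (1 / x * x, 1 / x * y)"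
    using False unfolding is_line_def on_line_def dirl_def tL_def uL_def vL_def by simp
  then show ?thesis by blast
qed

lemma rot_nz:
  fixes A B C E :: "('a::field) line"
  assumes det: "qdet (A,B,C,E) \<noteq> 0" and nz: "u \<noteq> 0 \<or> t \<noteq> 0"
  shows "fst (rot (A,B,C,E) (u,t)) \<noteq> 0 \<or> snd (rot (A,B,C,E) (u,t)) \<noteq> 0"
    and "qgamma (A,B,C,E) * u - qbeta (A,B,C,E) * t \<noteq> 0 \<or> - qbeta (A,B,C,E) * u + qalpha (A,B,C,E) * t \<noteq> 0"
proof -
  let ?Q = "(A,B,C,E)"
  let ?al = "qalpha ?Q" and ?be = "qbeta ?Q" and ?ga = "qgamma ?Q"
  have d: "qdet ?Q = ?al * ?ga - ?be^2" unfolding qdet_def by simp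
  show "fst (rot ?Q (u,t)) \<noteq> 0 \<or> snd (rot ?Q (u,t)) \<noteq> 0"
  proof (rule ccontr)
    assume "\<not> ?thesis"
    then have e: "?be * u - ?al * t = 0" "?ga * u - ?be * t = 0" unfolding rot_def by auto
    have "qdet ?Q * u = ?al * (?ga * u - ?be * t) - ?be * (?be * u - ?al * t)" unfolding d by (simp add: algebra_simps power2_eq_square)
    then have "u = 0" using e det by simp
    have "qdet ?Q * t = ?be * (?ga * u - ?be * t) - ?ga * (?be * u - ?al * t)" unfolding d by (simp add: algebra_simps power2_eq_square)
    then have "t = 0" using e det by simp
    then show False using nz \<open>u = 0\<close> by simp
  qed
  show "?ga * u - ?be * t \<noteq> 0 \<or> - ?be * u + ?al * t \<noteq> 0"
  proof (rule ccontr)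
    assume "\<not> ?thesis"
    then have e: "?ga * u - ?be * t = 0" "- ?be * u + ?al * t = 0" by auto
    have "qdet ?Q * u = ?al * (?ga * u - ?be * t) + ?be * (- ?be * u + ?al * t)" unfolding d by (simp add: algebra_simps power2_eq_square)
    then have "u = 0" using e det by simp
    have "qdet ?Q * t = ?be * (?ga * u - ?be * t) + ?ga * (- ?be * u + ?al * t)" unfolding d by (simp add: algebra_simps power2_eq_square)
    then have "t = 0" using e det by simp
    then show False using nz \<open>u = 0\<close> by simp
  qed
qed



lemma iso_pair:
  fixes A B C E L1 L2 :: "('a::field) line"
  assumes two: "(2::'a) \<noteq> 0" and Q: "quadrilateral (A,B,C,E)"
    and cr: "\<And>d. pax L1 L2 d * NX A B C E d + pay L1 L2 d * NY A B C E d + pb L1 L2 d * qq A B C E d = 0"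
    and q0: "qq A B C E (u0,t0) = 0" and nx0: "NX A B C E (u0,t0) = 0" and ny0: "NY A B C E (u0,t0) = 0"
    and nz: "u0 \<noteq> 0 \<or> t0 \<noteq> 0"
  shows "pe L1 L2 (u0,t0) (centroid (A,B,C,E)) = 0"
proof -
  let ?Q = "(A,B,C,E)"
  define al where "al = qalpha ?Q"
  define be where "be = qbeta ?Q"
  define ga where "ga = qgamma ?Q"
  define cx where "cx = fst (centroid ?Q)"
  define cy where "cy = snd (centroid ?Q)"
  let ?q = "qq A B C E" and ?nx = "NX A B C E" and ?ny = "NY A B C E"
  define w1 where "w1 = ?nx (1,0) - cx * ?q (1,0)"
  define w2 where "w2 = (?nx (1,1) - ?nx (1,0) - ?nx (0,1)) - cx * (?q (1,1) - ?q (1,0) - ?q (0,1))"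
  define w3 where "w3 = ?nx (0,1) - cx * ?q (0,1)"
  define z1 where "z1 = ?ny (1,0) - cy * ?q (1,0)"
  define z2 where "z2 = (?ny (1,1) - ?ny (1,0) - ?ny (0,1)) - cy * (?q (1,1) - ?q (1,0) - ?q (0,1))"
  define z3 where "z3 = ?ny (0,1) - cy * ?q (0,1)"
  define ax1 where "ax1 = pax L1 L2 (1,0)"
  define ax2 where "ax2 = pax L1 L2 (0,1)"
  define ay1 where "ay1 = pay L1 L2 (1,0)"
  define ay2 where "ay2 = pay L1 L2 (0,1)"
  define b1 where "b1 = pb L1 L2 (1,0)"
  define b2 where "b2 = pb L1 L2 (0,1)"
  have eq: "-2*(ga*u^2 - 2*be*u*t + al*t^2) = ?q (u,t)" for u t
    using H2[of A B C E "(u,t)"] unfolding Qf_def al_def be_def ga_def by simp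
  have ew: "w1*u^2 + w2*u*t + w3*t^2 = ?nx (u,t) - cx * ?q (u,t)" for u t
    unfolding NX_form[of A B C E u t] qq_form[of A B C E u t] w1_def w2_def w3_def
    by (simp add: algebra_simps)
  have ez: "z1*u^2 + z2*u*t + z3*t^2 = ?ny (u,t) - cy * ?q (u,t)" for u t
    unfolding NY_form[of A B C E u t] qq_form[of A B C E u t] z1_def z2_def z3_def
    by (simp add: algebra_simps)
  have ex: "ax1*u + ax2*t = pax L1 L2 (u,t)" for u t using pax_lin[of L1 L2 u t] unfolding ax1_def ax2_def by simp
  have ey: "ay1*u + ay2*t = pay L1 L2 (u,t)" for u t using pay_lin[of L1 L2 u t] unfolding ay1_def ay2_def by simp
  have eb: "b1*u + b2*t = pb L1 L2 (u,t)" for u t using pb_lin[of L1 L2 u t] unfolding b1_def b2_def by simp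
  have P: "(-2*(ga*u^2 - 2*be*u*t + al*t^2)) * ((ax1*u + ax2*t)*cx + (ay1*u + ay2*t)*cy + (b1*u + b2*t))
      + (ax1*u + ax2*t)*(w1*u^2 + w2*u*t + w3*t^2) + (ay1*u + ay2*t)*(z1*u^2 + z2*u*t + z3*t^2) = 0" for u t
  proof -
    have "(-2*(ga*u^2 - 2*be*u*t + al*t^2)) * ((ax1*u + ax2*t)*cx + (ay1*u + ay2*t)*cy + (b1*u + b2*t))
      + (ax1*u + ax2*t)*(w1*u^2 + w2*u*t + w3*t^2) + (ay1*u + ay2*t)*(z1*u^2 + z2*u*t + z3*t^2)
      = ?q (u,t) * (pax L1 L2 (u,t)*cx + pay L1 L2 (u,t)*cy + pb L1 L2 (u,t))
      + pax L1 L2 (u,t) * (?nx (u,t) - cx * ?q (u,t)) + pay L1 L2 (u,t) * (?ny (u,t) - cy * ?q (u,t))"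
      unfolding eq ew ez ex ey eb ..
    also have "\<dots> = pax L1 L2 (u,t) * ?nx (u,t) + pay L1 L2 (u,t) * ?ny (u,t) + pb L1 L2 (u,t) * ?q (u,t)"
      by (simp add: algebra_simps)
    also have "\<dots> = 0" by (rule cr)
    finally show ?thesis .
  qed
  have det: "al*ga - be^2 \<noteq> 0" using qdet_nz[OF Q] unfolding qdet_def al_def be_def ga_def .
  have apW: "al*w1 + be*w2 + ga*w3 = 0"
    using H3(1)[OF two Q] unfolding Tf_def w1_def w2_def w3_def al_def be_def ga_def cx_def
    by (simp add: algebra_simps)
  have apZ: "al*z1 + be*z2 + ga*z3 = 0"
    using H3(2)[OF two Q] unfolding Tf_def z1_def z2_def z3_def al_def be_def ga_def cy_def
    by (simp add: algebra_simps)
  have "-2*(ga*u0^2 - 2*be*u0*t0 + al*t0^2) = 0" using eq[of u0 t0] unfolding q0 .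
  then have "(-2::'a) = 0 \<or> ga*u0^2 - 2*be*u0*t0 + al*t0^2 = 0" by (simp only: mult_eq_0_iff)
  moreover have "(-2::'a) \<noteq> 0" using two by simp
  ultimately have iso: "ga*u0^2 - 2*be*u0*t0 + al*t0^2 = 0" by blast
  have W0: "w1*u0^2 + w2*u0*t0 + w3*t0^2 = 0" using ew[of u0 t0] q0 nx0 by simp
  have Z0: "z1*u0^2 + z2*u0*t0 + z3*t0^2 = 0" using ez[of u0 t0] q0 ny0 by simp
  have "(ax1*u0 + ax2*t0)*cx + (ay1*u0 + ay2*t0)*cy + (b1*u0 + b2*t0) = 0"
    by (rule iso_core[OF two det P apW apZ iso nz W0 Z0])
  then show ?thesis unfolding ex ey eb pe_def cx_def cy_def by simp
qed



lemma pe_lin: "pe L1 L2 (x,y) m = pe L1 L2 (1,0) m * x + pe L1 L2 (0,1) m * y"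
  unfolding pe_def pax_def pay_def pb_def DD_def by (simp add: algebra_simps)

lemma midpt_solve:
  fixes a b c :: "'a::field \<times> 'a"
  assumes two: "(2::'a) \<noteq> 0" and h: "midpt a b = c"
  shows "b = (2 * fst c - fst a, 2 * snd c - snd a)"
proof -
  have "(fst a + fst b) / 2 = fst c" "(snd a + snd b) / 2 = snd c" using h unfolding midpt_def by auto
  then have "fst b = 2 * fst c - fst a" "snd b = 2 * snd c - snd a" using two by (simp_all add: field_simps)
  then show ?thesis by (simp add: prod_eq_iff)
qed

lemma midpt_back:
  fixes a c :: "'a::field \<times> 'a"
  assumes two: "(2::'a) \<noteq> 0"
  shows "midpt a (2 * fst c - fst a, 2 * snd c - snd a) = c"
  unfolding midpt_def using two by (simp add: prod_eq_iff)

lemma qinner_eq: "qinner Q (u,t) (x,y) = (qgamma Q * u - qbeta Q * t) * x + (- qbeta Q * u + qalpha Q * t) * y"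
  unfolding qinner_def by (simp add: algebra_simps)

theorem corollary6p7:
  fixes Q :: "('a::field) quad" and l :: "'a line"
  assumes "(2::'a) \<noteq> 0"
    and "quadrilateral Q"
    and "bisector Q l"
  shows "\<exists>!l'. is_line l' \<and> bisector Q l' \<and> Q_pair Q l l'"
proof -
  note two = assms(1)
  obtain A B C E where QE: "Q = (A,B,C,E)" by (cases Q) auto
  have Q: "quadrilateral (A,B,C,E)" using assms(2) QE by simp
  have b: "bisector (A,B,C,E) l" using assms(3) QE by simp
  have l: "is_line l" using b unfolding bisector_def by simp
  obtain m1 where m1: "bis_mid (A,B,C,E) l = Fin m1" using char_full(2)[OF two Q l b] by blast
  have m1c: "on_line m1 l \<and> pe A C (dirl l) m1 = 0 \<and> pe B E (dirl l) m1 = 0"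
    using char_full(1)[OF two Q l] b m1 by blast
  define u where "u = uL l"
  define t where "t = tL l"
  have dl: "dirl l = (u,t)" unfolding dirl_def u_def t_def by simp
  have nz: "u \<noteq> 0 \<or> t \<noteq> 0" using is_line_dir[OF l] dl by auto
  define c where "c = centroid (A,B,C,E)"
  define m2 where "m2 = (2 * fst c - fst m1, 2 * snd c - snd m1)"
  define dd where "dd = rot (A,B,C,E) (u,t)"
  have det: "qdet (A,B,C,E) \<noteq> 0" by (rule qdet_nz[OF Q])
  have pe1: "pe A C (u,t) m1 = 0" "pe B E (u,t) m1 = 0" using m1c dl by simp_all
  note sol1 = sol[OF pe1]
  have pe2: "pe A C dd m2 = 0 \<and> pe B E dd m2 = 0"
  proof (cases "qq A B C E (u,t) = 0")
    case False
    have qdd: "qq A B C E dd = qdet (A,B,C,E) * qq A B C E (u,t)" unfolding dd_def by (rule qq_rot)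
    have qddnz: "qq A B C E dd \<noteq> 0" using det False qdd by simp
    have nxdd: "NX A B C E dd = qq A B C E dd * fst m2"
      using KEY(1)[OF two Q, of "(u,t)"] sol1(1) qdd unfolding dd_def[symmetric] m2_def c_def[symmetric]
      by (simp add: algebra_simps)
    have nydd: "NY A B C E dd = qq A B C E dd * snd m2"
      using KEY(2)[OF two Q, of "(u,t)"] sol1(2) qdd unfolding dd_def[symmetric] m2_def c_def[symmetric]
      by (simp add: algebra_simps)
    have "qq A B C E dd * pe A C dd m2 = pax A C dd * NX A B C E dd + pay A C dd * NY A B C E dd + pb A C dd * qq A B C E dd"
      unfolding pe_def nxdd nydd by (simp add: algebra_simps)
    also have "\<dots> = 0" by (rule cramer1)
    finally have a: "pe A C dd m2 = 0" using qddnz by simp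
    have "qq A B C E dd * pe B E dd m2 = pax B E dd * NX A B C E dd + pay B E dd * NY A B C E dd + pb B E dd * qq A B C E dd"
      unfolding pe_def nxdd nydd by (simp add: algebra_simps)
    also have "\<dots> = 0" by (rule cramer2)
    finally have b: "pe B E dd m2 = 0" using qddnz by simp
    show ?thesis using a b by simp
  next
    case True
    have N0: "NX A B C E (u,t) = 0" "NY A B C E (u,t) = 0" using sol1 True by simp_all
    have pc1: "pe A C (u,t) c = 0" unfolding c_def by (rule iso_pair[OF two Q cramer1 True N0 nz])
    have pc2: "pe B E (u,t) c = 0" unfolding c_def by (rule iso_pair[OF two Q cramer2 True N0 nz])
    have pm1: "pe A C (u,t) m2 = 0" unfolding m2_def pe_affine using pc1 pe1 by simp
    have pm2: "pe B E (u,t) m2 = 0" unfolding m2_def pe_affine using pc2 pe1 by simp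
    have "qq A B C E (u,t) = -2 * Qf (A,B,C,E) (u,t)" by (rule H2)
    then have "-2 * Qf (A,B,C,E) (u,t) = 0" using True by simp
    then have Qf0: "Qf (A,B,C,E) (u,t) = 0" using two by simp
    have cross: "fst dd * t - snd dd * u = 0"
    proof -
      have "fst dd * t - snd dd * u = - Qf (A,B,C,E) (u,t)"
        unfolding dd_def rot_def Qf_def by (simp add: algebra_simps power2_eq_square)
      then show ?thesis using Qf0 by simp
    qed
    have dd_eq: "dd = (fst dd, snd dd)" by simp
    have a: "pe A C dd m2 = 0"
      using lin_par_zero[of "pe A C (1,0) m2" u "pe A C (0,1) m2" t "fst dd" "snd dd"] pm1 nz cross
        pe_lin[of A C u t m2] pe_lin[of A C "fst dd" "snd dd" m2] by simp
    have b: "pe B E dd m2 = 0"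
      using lin_par_zero[of "pe B E (1,0) m2" u "pe B E (0,1) m2" t "fst dd" "snd dd"] pm2 nz cross
        pe_lin[of B E u t m2] pe_lin[of B E "fst dd" "snd dd" m2] by simp
    show ?thesis using a b by simp
  qed
  have ddnz: "fst dd \<noteq> 0 \<or> snd dd \<noteq> 0" unfolding dd_def by (rule rot_nz(1)[OF det nz])
  obtain l' k where l': "is_line l'" "on_line m2 l'" "k \<noteq> 0" "dirl l' = (k * fst dd, k * snd dd)"
    using mkline[OF ddnz, of m2] by blast
  have pel': "pe A C (dirl l') m2 = 0" "pe B E (dirl l') m2 = 0"
    using pe2 pe_scale[of A C k "fst dd" "snd dd" m2] pe_scale[of B E k "fst dd" "snd dd" m2] l'(4) by simp_all
  have bl': "bisector (A,B,C,E) l' \<and> bis_mid (A,B,C,E) l' = Fin m2"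
    using char_full(1)[OF two Q l'(1)] l'(2) pel' by blast
  have mid: "midpt m1 m2 = c" unfolding m2_def by (rule midpt_back[OF two])
  have Md: "qgamma (A,B,C,E) * u - qbeta (A,B,C,E) * t \<noteq> 0 \<or> - qbeta (A,B,C,E) * u + qalpha (A,B,C,E) * t \<noteq> 0"
    by (rule rot_nz(2)[OF det nz])
  have orth: "q_orthogonal (A,B,C,E) l l'"
  proof -
    have "(uL l', tL l') = (k * fst dd, k * snd dd)" using l'(4) unfolding dirl_def .
    then have e: "uL l' = k * fst dd" "tL l' = k * snd dd" by auto
    show ?thesis unfolding q_orthogonal_def u_def[symmetric] t_def[symmetric] qinner_eq e
      unfolding dd_def rot_def by (simp add: algebra_simps)
  qed
  have P: "is_line l' \<and> bisector Q l' \<and> Q_pair Q l l'"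
    unfolding QE Q_pair_def using l'(1) bl' b m1 mid orth c_def by blast
  show ?thesis
  proof (rule ex1I[of _ l'])
    show "is_line l' \<and> bisector Q l' \<and> Q_pair Q l l'" by (rule P)
  next
    fix y assume y: "is_line y \<and> bisector Q y \<and> Q_pair Q l y"
    then obtain n1 n2 where n: "bis_mid Q l = Fin n1" "bis_mid Q y = Fin n2" "midpt n1 n2 = centroid Q"
      and oy: "q_orthogonal Q l y" unfolding Q_pair_def by blast
    have "n1 = m1" using n(1) m1 QE by simp
    then have "n2 = m2" using midpt_solve[OF two n(3)] unfolding m2_def c_def QE by simp
    then have by': "bisector (A,B,C,E) y \<and> bis_mid (A,B,C,E) y = Fin m2" using y n(2) QE by simp
    have yl: "is_line y" using y by simp
    have ym: "on_line m2 y" using char_full(1)[OF two Q yl] by' by blast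
    have o1: "(qgamma (A,B,C,E) * u - qbeta (A,B,C,E) * t) * uL y + (- qbeta (A,B,C,E) * u + qalpha (A,B,C,E) * t) * tL y = 0"
      using oy unfolding QE q_orthogonal_def u_def[symmetric] t_def[symmetric] qinner_eq .
    have o2: "(qgamma (A,B,C,E) * u - qbeta (A,B,C,E) * t) * uL l' + (- qbeta (A,B,C,E) * u + qalpha (A,B,C,E) * t) * tL l' = 0"
      using orth unfolding q_orthogonal_def u_def[symmetric] t_def[symmetric] qinner_eq .
    have "uL y * tL l' = tL y * uL l'" by (rule lin_dep[OF Md o1 o2])
    then have "parallel y l'" unfolding parallel_def by (simp add: algebra_simps)
    then show "y = l'" using par_common_eq[OF yl l'(1) _ ym l'(2)] by simp
  qed
qed

end
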